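(* Let $T>0$, $B=e_3$ constant, and let $E:[0,T]\times\mathbb{R}^2\to\mathbb{R}^2$ be bounded and Lipschitz. For $\Delta t>0$, $\varepsilon>0$ set $t^n=n\Delta t$, $\lambda=\Delta t/\varepsilon^2$, and given $(x^0,v^0)$ define $(x^n,v^n)$ by $$\varepsilon\frac{x^{n+1}-x^n}{\Delta t}=v^{n+1},\qquad \varepsilon\frac{v^{n+1}-v^n}{\Delta t}=\frac1\varepsilon v^{n+1}\wedge e_3+E(t^n,x^n),$$ and $(y^n)$ by the modified initial datum $y^0=x^0+\varepsilon\big(v^0\wedge e_3+\varepsilon E(t^0,x^0)\big)$ and $\dfrac{y^{n+1}-y^n}{\Delta t}=E(t^n,y^n)\wedge e_3$. Then there exist $C>0$ and $\lambda_0>0$ depending only on $E$ and $T$ such that whenever $0<\Delta t\le1$ and $\lambda\ge\lambda_0$, for all $n\ge1$ with $t^n\le T$, $$\|x^n-y^n\|\le\frac{C\,\Delta t}{\lambda}\Big[1+\Big(\frac1\lambda+\Delta t\Big)\Big\|\frac{v^0}{\varepsilon}-E(t^0,x^0)\wedge e_3\Big\|\Big].$$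
   Context: Vectors of $\mathbb{R}^2$ are identified with vectors $(w_1,w_2,0)$ of $\mathbb{R}^3$, $e_3=(0,0,1)$, and $\wedge$ is the cross product; thus for $w\in\mathbb{R}^2$, $w\wedge e_3=(w_2,-w_1)\in\mathbb{R}^2$. *)

theory Defs
  imports "HOL-Analysis.Analysis"
begin

text \<open>Cross product with e3 for planar vectors: w wedge e3 = (w2, -w1).\<close>
definition wedge_e3 :: "real^2 \<Rightarrow> real^2" where
  "wedge_e3 w = (\<chi> i. if i = 1 then w $ 2 else - (w $ 1))"

end

theory Submission
  imports Defs
begin

lemma J_add: "wedge_e3 (a + b) = wedge_e3 a + wedge_e3 b"
  by (simp add: wedge_e3_def vec_eq_iff)
lemma J_diff: "wedge_e3 (a - b) = wedge_e3 a - wedge_e3 b"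
  by (simp add: wedge_e3_def vec_eq_iff)
lemma J_scale: "wedge_e3 (c *\<^sub>R a) = c *\<^sub>R wedge_e3 a"
  by (simp add: wedge_e3_def vec_eq_iff)
lemma J_J: "wedge_e3 (wedge_e3 a) = - a"
  by (simp add: wedge_e3_def vec_eq_iff forall_2)
lemma norm_sq2: "(norm (a::real^2))^2 = (a$1)^2 + (a$2)^2"
  by (simp add: norm_vec_def L2_set_def sum_2)
lemma J_norm: "norm (wedge_e3 a) = norm a"
proof -
  have "(norm (wedge_e3 a))^2 = (norm a)^2"
    by (simp add: norm_sq2 wedge_e3_def)
  then show ?thesis by (simp add: power2_eq_iff_nonneg)
qed
lemma J_inv:
  assumes "q - lam *\<^sub>R wedge_e3 q = p" "lam > 0"
  shows "norm q \<le> norm p / lam"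
proof -
  have "(norm p)^2 = (1 + lam^2) * (norm q)^2"
  proof -
    have h: "p$1 = q$1 - lam * q$2" "p$2 = q$2 + lam * q$1"
      using assms(1)[symmetric] by (simp_all add: wedge_e3_def)
    show ?thesis unfolding norm_sq2 h by (simp add: power2_eq_square algebra_simps)
  qed
  then have "lam^2 * (norm q)^2 \<le> (norm p)^2" by (simp add: algebra_simps)
  then have "(lam * norm q)^2 \<le> (norm p)^2" by (simp add: power_mult_distrib)
  then have "lam * norm q \<le> norm p"
    using assms(2) by (meson norm_ge_zero power2_le_imp_le)
  then show ?thesis using assms(2) by (simp add: field_simps)
qed

theorem mainTheorem6:
  fixes T :: real and E :: "real \<Rightarrow> real^2 \<Rightarrow> real^2"
  assumes T_pos: "T > 0"
    and E_bounded: "\<exists>M. \<forall>t\<in>{0..T}. \<forall>z. norm (E t z) \<le> M"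
    and E_lipschitz: "\<exists>L. \<forall>t\<in>{0..T}. \<forall>s\<in>{0..T}. \<forall>z w.
           norm (E t z - E s w) \<le> L * (\<bar>t - s\<bar> + norm (z - w))"
  shows "\<exists>C>0. \<exists>lam0>0. \<forall>(dt::real) (eps::real) (x::nat \<Rightarrow> real^2) (v::nat \<Rightarrow> real^2) (y::nat \<Rightarrow> real^2).
    0 < dt \<longrightarrow> dt \<le> 1 \<longrightarrow> 0 < eps \<longrightarrow> dt / eps^2 \<ge> lam0 \<longrightarrow>
    (\<forall>n. eps *\<^sub>R ((1 / dt) *\<^sub>R (x (Suc n) - x n)) = v (Suc n)) \<longrightarrow>
    (\<forall>n. eps *\<^sub>R ((1 / dt) *\<^sub>R (v (Suc n) - v n))
          = (1 / eps) *\<^sub>R wedge_e3 (v (Suc n)) + E (real n * dt) (x n)) \<longrightarrow>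
    y 0 = x 0 + eps *\<^sub>R (wedge_e3 (v 0) + eps *\<^sub>R E 0 (x 0)) \<longrightarrow>
    (\<forall>n. (1 / dt) *\<^sub>R (y (Suc n) - y n) = wedge_e3 (E (real n * dt) (y n))) \<longrightarrow>
    (\<forall>n. 1 \<le> n \<longrightarrow> real n * dt \<le> T \<longrightarrow>
       norm (x n - y n) \<le> C * dt / (dt / eps^2) *
         (1 + (1 / (dt / eps^2) + dt) *
              norm ((1 / eps) *\<^sub>R v 0 - wedge_e3 (E 0 (x 0)))))"
proof -
  obtain M0 where M0: "\<forall>t\<in>{0..T}. \<forall>z. norm (E t z) \<le> M0" using E_bounded by blast
  define M where "M = max M0 0"
  have Mb: "\<And>t z. t \<in> {0..T} \<Longrightarrow> norm (E t z) \<le> M" using M0 unfolding M_def by (meson max.coboundedI1)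
  have M0le: "M \<ge> 0" unfolding M_def by simp
  obtain L0 where L0: "\<forall>t\<in>{0..T}. \<forall>s\<in>{0..T}. \<forall>z w.
           norm (E t z - E s w) \<le> L0 * (\<bar>t - s\<bar> + norm (z - w))" using E_lipschitz by blast
  define L where "L = max L0 0"
  have L0le: "L \<ge> 0" unfolding L_def by simp
  have Lb: "\<And>t z w. t \<in> {0..T} \<Longrightarrow> norm (E t z - E t w) \<le> L * norm (z - w)"
  proof -
    fix t z w assume "t \<in> {0..T}"
    then have "norm (E t z - E t w) \<le> L0 * norm (z - w)" using L0 by force
    also have "\<dots> \<le> L * norm (z - w)" unfolding L_def by (simp add: mult_right_mono)
    finally show "norm (E t z - E t w) \<le> L * norm (z - w)" .
  qed
  define Ex where "Ex = exp (L * T)"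
  have Ex1: "Ex \<ge> 1" unfolding Ex_def using L0le T_pos by simp
  define K0 where "K0 = Ex * (M + L * M + 3 * L * T * M) + 3 * M"
  define K1 where "K1 = Ex * L"
  define K2 where "K2 = Ex * L * T + 1"
  define C where "C = K0 + K1 + K2 + 1"
  have K0p: "K0 \<ge> 0" unfolding K0_def using M0le L0le T_pos Ex1 by simp
  have K1p: "K1 \<ge> 0" unfolding K1_def using L0le Ex1 by simp
  have K2p: "K2 \<ge> 1" unfolding K2_def using L0le T_pos Ex1 by simp
  have Cpos: "C > 0" unfolding C_def using K0p K1p K2p by simp
  show ?thesis
  proof (rule exI[of _ C], rule conjI[OF Cpos], rule exI[of _ "2::real"], rule conjI, simp, intro allI impI)
    fix dt eps :: real and x v y :: "nat \<Rightarrow> real^2" and n :: nat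
    assume dt0: "0 < dt" and dt1: "dt \<le> 1" and eps0: "0 < eps" and lam2: "2 \<le> dt / eps^2"
      and hx: "\<forall>n. eps *\<^sub>R ((1 / dt) *\<^sub>R (x (Suc n) - x n)) = v (Suc n)"
      and hv: "\<forall>n. eps *\<^sub>R ((1 / dt) *\<^sub>R (v (Suc n) - v n))
          = (1 / eps) *\<^sub>R wedge_e3 (v (Suc n)) + E (real n * dt) (x n)"
      and hy0: "y 0 = x 0 + eps *\<^sub>R (wedge_e3 (v 0) + eps *\<^sub>R E 0 (x 0))"
      and hy: "\<forall>n. (1 / dt) *\<^sub>R (y (Suc n) - y n) = wedge_e3 (E (real n * dt) (y n))"
      and n1: "1 \<le> n" and nT: "real n * dt \<le> T"
    define lam where "lam = dt / eps^2"
    define e2 where "e2 = eps^2"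
    have e2p: "e2 > 0" unfolding e2_def using eps0 by simp
    have lam_e2: "lam * e2 = dt" unfolding lam_def e2_def using eps0 by simp
    have lam2': "lam \<ge> 2" unfolding lam_def using lam2 .
    define w where "w = (\<lambda>n. (1 / eps) *\<^sub>R v n)"
    define u where "u = norm (w 0 - wedge_e3 (E 0 (x 0)))"
    define A where "A = 3 * M + u / lam"
    have u0: "u \<ge> 0" unfolding u_def by simp
    have A0: "A \<ge> 0" unfolding A_def using u0 M0le lam2' by simp
    have tin: "\<And>k. real k * dt \<le> T \<Longrightarrow> real k * dt \<in> {0..T}" using dt0 by simp
    have tSuc: "\<And>k. real (Suc k) * dt \<le> T \<Longrightarrow> real k * dt \<le> T"
      using dt0 by (simp add: algebra_simps)
    have xstep: "\<And>k. x (Suc k) - x k = dt *\<^sub>R w (Suc k)"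
    proof -
      fix k
      have "x (Suc k) - x k = (dt / eps) *\<^sub>R (eps *\<^sub>R ((1 / dt) *\<^sub>R (x (Suc k) - x k)))"
        using dt0 eps0 by simp
      also have "\<dots> = (dt / eps) *\<^sub>R v (Suc k)" using hx by simp
      finally show "x (Suc k) - x k = dt *\<^sub>R w (Suc k)" unfolding w_def by simp
    qed
    have wstep: "\<And>k. w (Suc k) - lam *\<^sub>R wedge_e3 (w (Suc k)) = w k + lam *\<^sub>R E (real k * dt) (x k)"
    proof -
      fix k
      have "w (Suc k) - w k = (dt / eps^2) *\<^sub>R (eps *\<^sub>R ((1 / dt) *\<^sub>R (v (Suc k) - v k)))"
        unfolding w_def using dt0 eps0 by (simp add: power2_eq_square algebra_simps)
      also have "\<dots> = (dt / eps^2) *\<^sub>R ((1 / eps) *\<^sub>R wedge_e3 (v (Suc k)) + E (real k * dt) (x k))"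
        using hv by simp
      also have "\<dots> = lam *\<^sub>R wedge_e3 (w (Suc k)) + lam *\<^sub>R E (real k * dt) (x k)"
        unfolding lam_def w_def by (simp add: J_scale scaleR_add_right)
      finally show "w (Suc k) - lam *\<^sub>R wedge_e3 (w (Suc k)) = w k + lam *\<^sub>R E (real k * dt) (x k)"
        by (simp add: algebra_simps)
    qed
    define z where "z = (\<lambda>k. x k + e2 *\<^sub>R wedge_e3 (w k))"
    have zstep: "\<And>k. z (Suc k) - z k = dt *\<^sub>R wedge_e3 (E (real k * dt) (x k))"
    proof -
      fix k
      have ws: "w (Suc k) - w k = lam *\<^sub>R wedge_e3 (w (Suc k)) + lam *\<^sub>R E (real k * dt) (x k)"
        using wstep[of k] by (simp add: algebra_simps)
      have "z (Suc k) - z k = (x (Suc k) - x k) + e2 *\<^sub>R wedge_e3 (w (Suc k) - w k)"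
        unfolding z_def by (simp add: J_diff algebra_simps)
      also have "\<dots> = dt *\<^sub>R w (Suc k) + e2 *\<^sub>R (lam *\<^sub>R (- w (Suc k)) + lam *\<^sub>R wedge_e3 (E (real k * dt) (x k)))"
        unfolding xstep ws by (simp add: J_add J_scale J_J)
      also have "\<dots> = dt *\<^sub>R wedge_e3 (E (real k * dt) (x k))"
        using lam_e2 by (simp add: algebra_simps)
      finally show "z (Suc k) - z k = dt *\<^sub>R wedge_e3 (E (real k * dt) (x k))" .
    qed
    have ystep: "\<And>k. y (Suc k) - y k = dt *\<^sub>R wedge_e3 (E (real k * dt) (y k))"
    proof -
      fix k
      have "y (Suc k) - y k = dt *\<^sub>R ((1 / dt) *\<^sub>R (y (Suc k) - y k))" using dt0 by simp
      then show "y (Suc k) - y k = dt *\<^sub>R wedge_e3 (E (real k * dt) (y k))" using hy by simp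
    qed
    define e where "e = (\<lambda>k. z k - y k)"
    have e0: "e 0 = - e2 *\<^sub>R E 0 (x 0)"
      unfolding e_def z_def hy0 w_def e2_def using eps0
      by (simp add: J_scale J_add power2_eq_square algebra_simps)
    have e0n: "norm (e 0) \<le> e2 * M"
      unfolding e0 using Mb[of 0 "x 0"] T_pos e2p by (simp add: mult_left_mono)
    have xy: "\<And>k. x k - y k = e k - e2 *\<^sub>R wedge_e3 (w k)"
      unfolding e_def z_def by (simp add: algebra_simps)
    have xyn: "\<And>k. norm (x k - y k) \<le> norm (e k) + e2 * norm (w k)"
    proof -
      fix k
      have "norm (x k - y k) \<le> norm (e k) + norm (e2 *\<^sub>R wedge_e3 (w k))"
        unfolding xy by (rule norm_triangle_ineq4)
      then show "norm (x k - y k) \<le> norm (e k) + e2 * norm (w k)"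
        using e2p by (simp add: J_norm)
    qed
    have estep: "\<And>k. real k * dt \<le> T \<Longrightarrow>
        norm (e (Suc k)) \<le> (1 + L * dt) * norm (e k) + L * dt * e2 * norm (w k)"
    proof -
      fix k assume kT: "real k * dt \<le> T"
      have "e (Suc k) = e k + dt *\<^sub>R wedge_e3 (E (real k * dt) (x k) - E (real k * dt) (y k))"
        using zstep[of k] ystep[of k] unfolding e_def by (simp add: J_diff algebra_simps)
      then have "norm (e (Suc k)) \<le> norm (e k) + dt * norm (E (real k * dt) (x k) - E (real k * dt) (y k))"
        using dt0 by (metis J_norm norm_scaleR norm_triangle_ineq abs_of_pos)
      also have "\<dots> \<le> norm (e k) + dt * (L * norm (x k - y k))"
        using Lb[OF tin[OF kT]] dt0 by (simp add: mult_left_mono)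
      also have "\<dots> \<le> norm (e k) + dt * (L * (norm (e k) + e2 * norm (w k)))"
        using xyn[of k] dt0 L0le by (simp add: mult_left_mono)
      finally show "norm (e (Suc k)) \<le> (1 + L * dt) * norm (e k) + L * dt * e2 * norm (w k)"
        by (simp add: algebra_simps)
    qed
    have wrec: "\<And>k. real k * dt \<le> T \<Longrightarrow> norm (w (Suc k)) \<le> (norm (w k) + M) / lam + M"
    proof -
      fix k assume kT: "real k * dt \<le> T"
      define Ek where "Ek = E (real k * dt) (x k)"
      have EkM: "norm Ek \<le> M" unfolding Ek_def using Mb[OF tin[OF kT]] .
      define q where "q = w (Suc k) - wedge_e3 Ek"
      have "q - lam *\<^sub>R wedge_e3 q = w k - wedge_e3 Ek"
      proof -
        have "q - lam *\<^sub>R wedge_e3 q = (w (Suc k) - lam *\<^sub>R wedge_e3 (w (Suc k))) - lam *\<^sub>R Ek - wedge_e3 Ek"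
          unfolding q_def by (simp add: J_diff J_J algebra_simps)
        then show ?thesis using wstep[of k] unfolding Ek_def by simp
      qed
      then have qb: "norm q \<le> norm (w k - wedge_e3 Ek) / lam"
        using lam2' by (intro J_inv) auto
      have "norm (w k - wedge_e3 Ek) \<le> norm (w k) + M"
        using norm_triangle_ineq4[of "w k" "wedge_e3 Ek"] EkM by (simp add: J_norm)
      then have qb2: "norm q \<le> (norm (w k) + M) / lam"
        using qb lam2' by (meson divide_right_mono order_trans less_le_trans zero_less_numeral less_imp_le)
      have "w (Suc k) = q + wedge_e3 Ek" unfolding q_def by simp
      then have "norm (w (Suc k)) \<le> norm q + M"
        using norm_triangle_ineq[of q "wedge_e3 Ek"] EkM by (simp add: J_norm)
      then show "norm (w (Suc k)) \<le> (norm (w k) + M) / lam + M" using qb2 by simp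
    qed
    have w0: "norm (w 0) \<le> u + M"
    proof -
      have "w 0 = (w 0 - wedge_e3 (E 0 (x 0))) + wedge_e3 (E 0 (x 0))" by simp
      then have "norm (w 0) \<le> u + norm (wedge_e3 (E 0 (x 0)))"
        unfolding u_def by (metis norm_triangle_ineq)
      then show ?thesis using Mb[of 0 "x 0"] T_pos by (simp add: J_norm)
    qed
    have wA: "\<And>k. real (Suc k) * dt \<le> T \<Longrightarrow> norm (w (Suc k)) \<le> A"
    proof -
      fix k show "real (Suc k) * dt \<le> T \<Longrightarrow> norm (w (Suc k)) \<le> A"
      proof (induction k)
        case 0
        have "norm (w 1) \<le> (norm (w 0) + M) / lam + M" using wrec[of 0] T_pos by simp
        also have "\<dots> \<le> (u + 2 * M) / lam + M"
          using w0 lam2' by (simp add: divide_right_mono)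
        also have "\<dots> = u / lam + 2 * M / lam + M" by (simp add: add_divide_distrib)
        also have "\<dots> \<le> u / lam + M + M"
        proof -
          have "2 * M \<le> lam * M" using lam2' M0le by (rule mult_right_mono)
          then have "2 * M / lam \<le> M" using lam2' by (simp add: divide_le_eq mult.commute)
          then show ?thesis by simp
        qed
        finally show ?case unfolding A_def using M0le by simp
      next
        case (Suc k)
        have kT: "real (Suc k) * dt \<le> T" using tSuc Suc.prems by blast
        have IH: "norm (w (Suc k)) \<le> A" using Suc.IH kT by blast
        have "norm (w (Suc (Suc k))) \<le> (norm (w (Suc k)) + M) / lam + M" using wrec kT by blast
        also have "\<dots> \<le> (A + M) / lam + M" using IH lam2' by (simp add: divide_right_mono)
        also have "\<dots> = 4 * M / lam + u / lam / lam + M" using lam2' unfolding A_def by (simp add: field_simps)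
        also have "\<dots> \<le> A"
        proof -
          have "2 * (2 * M) \<le> lam * (2 * M)" using lam2' M0le by (intro mult_right_mono) auto
          then have "4 * M / lam \<le> 2 * M" using lam2' by (simp add: divide_le_eq mult.commute)
          moreover have "u / lam / lam \<le> u / lam"
            using lam2' u0 by (simp add: divide_le_eq divide_nonneg_nonneg mult_le_cancel_left1 mult_left_mono)
          ultimately show ?thesis unfolding A_def by simp
        qed
        finally show ?case .
      qed
    qed
    define P where "P = 1 + L * dt"
    have P1: "P \<ge> 1" unfolding P_def using L0le dt0 by simp
    define X where "X = (\<lambda>k::nat. M + L * dt * (u + M) + real k * L * dt * A)"
    have Ldt: "L * dt \<ge> 0" using L0le dt0 by simp
    have eB: "\<And>k. real (Suc k) * dt \<le> T \<Longrightarrow> norm (e (Suc k)) \<le> e2 * P ^ Suc k * X (Suc k)"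
    proof -
      fix k show "real (Suc k) * dt \<le> T \<Longrightarrow> norm (e (Suc k)) \<le> e2 * P ^ Suc k * X (Suc k)"
      proof (induction k)
        case 0
        have "norm (e 1) \<le> P * norm (e 0) + L * dt * e2 * norm (w 0)"
          using estep[of 0] T_pos unfolding P_def by simp
        also have "\<dots> \<le> P * (e2 * M) + L * dt * e2 * (u + M)"
          using e0n w0 P1 Ldt e2p by (intro add_mono mult_left_mono) auto
        also have "\<dots> \<le> e2 * P ^ Suc 0 * X (Suc 0)"
        proof -
          have a0: "L * dt * e2 * (u + M) \<ge> 0" using Ldt e2p u0 M0le by simp
          have h1: "1 * (L * dt * e2 * (u + M)) \<le> P * (L * dt * e2 * (u + M))"
            using mult_right_mono[OF P1 a0] .
          have h2: "0 \<le> e2 * P * (L * dt * A)" using e2p P1 Ldt A0 by simp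
          have "e2 * P ^ Suc 0 * X (Suc 0) = P * (e2 * M) + P * (L * dt * e2 * (u + M)) + e2 * P * (L * dt * A)"
            unfolding X_def by (simp add: algebra_simps)
          then show ?thesis using h1 h2 by simp
        qed
        finally show ?case by simp
      next
        case (Suc k)
        have kT: "real (Suc k) * dt \<le> T" using tSuc Suc.prems by blast
        have IH: "norm (e (Suc k)) \<le> e2 * P ^ Suc k * X (Suc k)" using Suc.IH kT by blast
        have "norm (e (Suc (Suc k))) \<le> P * norm (e (Suc k)) + L * dt * e2 * norm (w (Suc k))"
          using estep[OF kT] unfolding P_def by simp
        also have "\<dots> \<le> P * (e2 * P ^ Suc k * X (Suc k)) + L * dt * e2 * A"
          using IH wA[OF kT] P1 Ldt e2p by (intro add_mono mult_left_mono) auto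
        also have "\<dots> \<le> e2 * P ^ Suc (Suc k) * X (Suc (Suc k))"
        proof -
          have a0: "L * dt * e2 * A \<ge> 0" using Ldt e2p A0 by simp
          have pp: "1 \<le> P ^ Suc (Suc k)" using P1 by (rule one_le_power)
          have h1: "1 * (L * dt * e2 * A) \<le> P ^ Suc (Suc k) * (L * dt * e2 * A)"
            using mult_right_mono[OF pp a0] .
          have "e2 * P ^ Suc (Suc k) * X (Suc (Suc k)) = P * (e2 * P ^ Suc k * X (Suc k)) + P ^ Suc (Suc k) * (L * dt * e2 * A)"
            unfolding X_def by (simp add: algebra_simps)
          then show ?thesis using h1 by simp
        qed
        finally show ?case .
      qed
    qed
    obtain m where nm: "n = Suc m" using n1 by (cases n) auto
    have Pn: "P ^ n \<le> Ex"
    proof -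
      have "P \<le> exp (L * dt)" unfolding P_def by (rule exp_ge_add_one_self[of "L*dt", simplified add.commute])
      then have "P ^ n \<le> exp (L * dt) ^ n" using P1 by (intro power_mono) auto
      also have "\<dots> = exp (real n * (L * dt))" by (simp add: exp_of_nat_mult)
      also have "\<dots> \<le> Ex" unfolding Ex_def using nT L0le
        by (simp add: mult_left_mono algebra_simps)
      finally show ?thesis .
    qed
    have Xn: "X n \<le> M + L * dt * (u + M) + L * T * A"
    proof -
      have "real n * dt * (L * A) \<le> T * (L * A)" using nT L0le A0 by (intro mult_right_mono) auto
      then show ?thesis unfolding X_def by (simp add: algebra_simps)
    qed
    have X0: "X n \<ge> 0"
    proof -
      have "L * dt * (u + M) \<ge> 0" using Ldt u0 M0le by simp
      moreover have "real n * (L * dt) * A \<ge> 0" using Ldt A0 by simp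
      ultimately show ?thesis unfolding X_def using M0le by (simp add: mult.assoc)
    qed
    have "norm (x n - y n) \<le> norm (e n) + e2 * norm (w n)" by (rule xyn)
    also have "\<dots> \<le> e2 * P ^ n * X n + e2 * A"
      using eB[of m] wA[of m] nT e2p unfolding nm by (intro add_mono mult_left_mono) auto
    also have "\<dots> \<le> e2 * (Ex * (M + L * dt * (u + M) + L * T * A) + A)"
    proof -
      have "P ^ n * X n \<le> Ex * (M + L * dt * (u + M) + L * T * A)"
        using Pn Xn X0 Ex1 by (intro mult_mono) auto
      then have "e2 * (P ^ n * X n) \<le> e2 * (Ex * (M + L * dt * (u + M) + L * T * A))"
        using e2p by (intro mult_left_mono) auto
      moreover have "e2 * P ^ n * X n + e2 * A = e2 * (P ^ n * X n) + e2 * A" by (simp add: mult.assoc)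
      moreover have "e2 * (Ex * (M + L * dt * (u + M) + L * T * A) + A) = e2 * (Ex * (M + L * dt * (u + M) + L * T * A)) + e2 * A"
        by (simp add: distrib_left)
      ultimately show ?thesis by linarith
    qed
    also have "\<dots> \<le> e2 * (K0 + K1 * dt * u + K2 * (u / lam))"
    proof -
      have "(L * M) * dt \<le> (L * M) * 1" using dt1 L0le M0le by (intro mult_left_mono) auto
      then have "Ex * (L * dt * M) \<le> Ex * (L * M)"
        using Ex1 by (intro mult_left_mono) (auto simp: algebra_simps)
      then have "Ex * (M + L * dt * (u + M) + L * T * A) + A \<le> K0 + K1 * dt * u + K2 * (u / lam)"
        unfolding K0_def K1_def K2_def A_def by (simp add: algebra_simps)
      then show ?thesis using e2p by (simp add: mult_left_mono)
    qed
    also have "\<dots> \<le> e2 * (C * (1 + (1 / lam + dt) * u))"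
    proof -
      have Cge: "K0 \<le> C" "K1 \<le> C" "K2 \<le> C" unfolding C_def using K0p K1p K2p by auto
      have "K1 * (dt * u) \<le> C * (dt * u)" using Cge dt0 u0 by (intro mult_right_mono) auto
      moreover have "K2 * (u / lam) \<le> C * (u / lam)" using Cge u0 lam2' by (intro mult_right_mono) auto
      ultimately have "K0 \<le> C" "K1 * (dt * u) \<le> C * (dt * u)" "K2 * (u / lam) \<le> C * (u / lam)"
        using Cge by auto
      then have "K0 + K1 * dt * u + K2 * (u / lam) \<le> C * (1 + (1 / lam + dt) * u)"
        by (simp add: algebra_simps)
      then show ?thesis using e2p by (simp add: mult_left_mono)
    qed
    also have "\<dots> = C * dt / (dt / eps^2) * (1 + (1 / (dt / eps^2) + dt) * u)"
    proof -
      have "dt / lam = e2" using lam_e2 lam2' by (simp add: field_simps)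
      then have "C * dt / lam = e2 * C" by (metis times_divide_eq_right mult.commute)
      then show ?thesis unfolding lam_def[symmetric] by simp
    qed
    finally show "norm (x n - y n) \<le> C * dt / (dt / eps^2) *
         (1 + (1 / (dt / eps^2) + dt) * norm ((1 / eps) *\<^sub>R v 0 - wedge_e3 (E 0 (x 0))))"
      unfolding u_def w_def by simp
  qed
qed

end
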